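(* Let $(X_t)_{t\geq0}$ be the cellular automaton defined below, with initial law such that the columns $(X_0(i,\cdot))_{i\in\mathbb N}$ are i.i.d. with common law $\mu$, a probability law on $\{0,1\}^{\mathbb N}$. Then for each $n\in\mathbb N$, the columns $(X_{2n}(i,\cdot))_{i\in\mathbb N}$ are i.i.d. with common law ${\cal F}^n(\mu)$. The same holds with $(X_t)$ replaced by $(\widehat X_t)$ and ${\cal F}$ replaced by $\widehat{\cal F}$.
   Context: Here $\mathbb N=\{0,1,2,\dots\}$, and $X_t(i,\cdot):=(X_t(i,j))_{j\in\mathbb N}$. **Cellular automata.** Given a random $X_0\in\{0,1\}^{\mathbb N^2}$, for $t>0$ and $(i,j)\in\mathbb N^2$ set: - $X_t(i,j)=X_{t-1}(2i,j)\wedge X_{t-1}(2i+1,j)$ if $t$ is even; - $X_t(i,j)=X_{t-1}(i,j)\vee X_{t-1}(i,j+1)$ if $t$ is odd. $\widehat X_t$ is defined likewise from $\widehat X_0$ (with the same initial column assumption) but with the two rules interchanged: the $\wedge$-rule at odd $t$ and the $\vee$-rule at even $t$. **Column maps.** Let $S=\{0,1\}^{\mathbb N}$ and ${\cal M}$ the set of probability laws on $S$. Define $\Phi_{\rm A}(y,z)(k)=y(k)\wedge z(k)$ and $\Phi_{\rm b}(y)(k)=y(k)\vee y(k+1)$. For $\mu\in{\cal M}$, ${\cal F}_{\rm A}(\mu)$ is the law of $\Phi_{\rm A}(Y,Z)$ and ${\cal F}_{\rm b}(\mu)$ is the law of $\Phi_{\rm b}(Y)$, where $Y,Z$ are independent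 with law $\mu$. Set ${\cal F}:={\cal F}_{\rm A}\circ{\cal F}_{\rm b}$ and $\widehat{\cal F}:={\cal F}_{\rm b}\circ{\cal F}_{\rm A}$; ${\cal F}^n$ is the $n$-th iterate. *)

theory Defs
  imports "HOL-Probability.Probability"
begin

definition S_M :: "(nat \<Rightarrow> bool) measure" where
  "S_M = PiM UNIV (\<lambda>_. count_space UNIV)"

text \<open>Configurations: x i j = X(i,j); x i is the i-th column.\<close>
type_synonym config = "nat \<Rightarrow> nat \<Rightarrow> bool"

definition and_step :: "config \<Rightarrow> config" where
  "and_step x = (\<lambda>i j. x (2*i) j \<and> x (2*i+1) j)"

definition or_step :: "config \<Rightarrow> config" where
  "or_step x = (\<lambda>i j. x i j \<or> x i (Suc j))"

primrec CA :: "config \<Rightarrow> nat \<Rightarrow> config" where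
  "CA x 0 = x"
| "CA x (Suc t) = (if even (Suc t) then and_step (CA x t) else or_step (CA x t))"

primrec CA_hat :: "config \<Rightarrow> nat \<Rightarrow> config" where
  "CA_hat x 0 = x"
| "CA_hat x (Suc t) = (if odd (Suc t) then and_step (CA_hat x t) else or_step (CA_hat x t))"

definition Phi_A :: "(nat \<Rightarrow> bool) \<Rightarrow> (nat \<Rightarrow> bool) \<Rightarrow> (nat \<Rightarrow> bool)" where
  "Phi_A y z = (\<lambda>k. y k \<and> z k)"

definition Phi_b :: "(nat \<Rightarrow> bool) \<Rightarrow> (nat \<Rightarrow> bool)" where
  "Phi_b y = (\<lambda>k. y k \<or> y (Suc k))"

definition F_A :: "(nat \<Rightarrow> bool) measure \<Rightarrow> (nat \<Rightarrow> bool) measure" where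
  "F_A \<mu> = distr (\<mu> \<Otimes>\<^sub>M \<mu>) S_M (\<lambda>(y, z). Phi_A y z)"

definition F_b :: "(nat \<Rightarrow> bool) measure \<Rightarrow> (nat \<Rightarrow> bool) measure" where
  "F_b \<mu> = distr \<mu> S_M Phi_b"

definition F :: "(nat \<Rightarrow> bool) measure \<Rightarrow> (nat \<Rightarrow> bool) measure" where
  "F = F_A \<circ> F_b"

definition F_hat :: "(nat \<Rightarrow> bool) measure \<Rightarrow> (nat \<Rightarrow> bool) measure" where
  "F_hat = F_b \<circ> F_A"

end

theory Submission
  imports Defs
begin

lemma comp_pred: "Measurable.pred S_M (\<lambda>\<omega>. \<omega> k)"
  unfolding S_M_def by (rule measurable_component_singleton) simp

lemma Phi_b_meas: "Phi_b \<in> measurable S_M S_M"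
  unfolding Phi_b_def
  apply (subst (2) S_M_def)
  apply (rule measurable_PiM_single')
   apply (rule pred_intros_logic comp_pred)+
  by auto

lemma Phi_A_meas: "(\<lambda>(y, z). Phi_A y z) \<in> measurable (S_M \<Otimes>\<^sub>M S_M) S_M"
proof -
  have f: "Measurable.pred (S_M \<Otimes>\<^sub>M S_M) (\<lambda>\<omega>. fst \<omega> k)" for k
    using measurable_compose[OF measurable_fst[of S_M S_M] comp_pred[of k]] by (simp add: comp_def)
  have s: "Measurable.pred (S_M \<Otimes>\<^sub>M S_M) (\<lambda>\<omega>. snd \<omega> k)" for k
    using measurable_compose[OF measurable_snd[of S_M S_M] comp_pred[of k]] by (simp add: comp_def)
  have "(\<lambda>\<omega>. \<lambda>k. fst \<omega> k \<and> snd \<omega> k) \<in> measurable (S_M \<Otimes>\<^sub>M S_M) S_M"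
    apply (subst (3) S_M_def)
    apply (rule measurable_PiM_single')
     apply (rule pred_intros_logic f s)+
    by auto
  then show ?thesis by (simp add: Phi_A_def split_beta')
qed

lemma Phi_A_restr_meas:
  "(\<lambda>r. Phi_A (r (2*j)) (r (2*j+1))) \<in> measurable (PiM {2*j, 2*j+1} (\<lambda>_. S_M)) S_M"
proof -
  have "(\<lambda>r. (r (2*j), r (2*j+1))) \<in> measurable (PiM {2*j, 2*j+1} (\<lambda>_. S_M)) (S_M \<Otimes>\<^sub>M S_M)"
    by measurable
  from measurable_comp[OF this Phi_A_meas] show ?thesis by (simp add: comp_def)
qed

lemma (in prob_space) step_b:
  fixes Y :: "nat \<Rightarrow> 'a \<Rightarrow> nat \<Rightarrow> bool"
  assumes ind: "indep_vars (\<lambda>_. S_M) Y UNIV" and d: "\<And>i. distr M S_M (Y i) = \<nu>"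
  shows "indep_vars (\<lambda>_. S_M) (\<lambda>i \<omega>. Phi_b (Y i \<omega>)) UNIV \<and>
         (\<forall>i. distr M S_M (\<lambda>\<omega>. Phi_b (Y i \<omega>)) = F_b \<nu>)"
proof
  show "indep_vars (\<lambda>_. S_M) (\<lambda>i \<omega>. Phi_b (Y i \<omega>)) UNIV"
    using indep_vars_compose2[OF ind, of "\<lambda>_. Phi_b"] Phi_b_meas by auto
  show "\<forall>i. distr M S_M (\<lambda>\<omega>. Phi_b (Y i \<omega>)) = F_b \<nu>"
  proof
    fix i
    have rv: "Y i \<in> measurable M S_M" using ind by (auto simp: indep_vars_def)
    have "distr M S_M (\<lambda>\<omega>. Phi_b (Y i \<omega>)) = distr (distr M S_M (Y i)) S_M Phi_b"
      using distr_distr[OF Phi_b_meas rv] by (simp add: comp_def)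
    then show "distr M S_M (\<lambda>\<omega>. Phi_b (Y i \<omega>)) = F_b \<nu>" using d by (simp add: F_b_def)
  qed
qed

lemma (in prob_space) step_A:
  fixes Y :: "nat \<Rightarrow> 'a \<Rightarrow> nat \<Rightarrow> bool"
  assumes ind: "indep_vars (\<lambda>_. S_M) Y UNIV" and d: "\<And>i. distr M S_M (Y i) = \<nu>"
  shows "indep_vars (\<lambda>_. S_M) (\<lambda>i \<omega>. Phi_A (Y (2*i) \<omega>) (Y (2*i+1) \<omega>)) UNIV \<and>
         (\<forall>i. distr M S_M (\<lambda>\<omega>. Phi_A (Y (2*i) \<omega>) (Y (2*i+1) \<omega>)) = F_A \<nu>)"
proof
  have disj: "disjoint_family_on (\<lambda>j::nat. {2*j, 2*j+1}) UNIV"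
    unfolding disjoint_family_on_def by auto
  have r: "indep_vars (\<lambda>j. PiM {2*j, 2*j+1} (\<lambda>_. S_M)) (\<lambda>j \<omega>. restrict (\<lambda>i. Y i \<omega>) {2*j, 2*j+1}) UNIV"
    apply (rule indep_vars_restrict[OF ind])
     apply simp
    by (rule disj)
  have "indep_vars (\<lambda>_. S_M) (\<lambda>j \<omega>. (\<lambda>r. Phi_A (r (2*j)) (r (2*j+1))) (restrict (\<lambda>i. Y i \<omega>) {2*j, 2*j+1})) UNIV"
    by (rule indep_vars_compose2[OF r]) (rule Phi_A_restr_meas)
  then show "indep_vars (\<lambda>_. S_M) (\<lambda>i \<omega>. Phi_A (Y (2*i) \<omega>) (Y (2*i+1) \<omega>)) UNIV"
    by simp
  show "\<forall>i. distr M S_M (\<lambda>\<omega>. Phi_A (Y (2*i) \<omega>) (Y (2*i+1) \<omega>)) = F_A \<nu>"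
  proof
    fix i :: nat
    have rv: "\<And>k. Y k \<in> measurable M S_M" using ind by (auto simp: indep_vars_def)
    have iv0: "indep_var (PiM {2*i} (\<lambda>_. S_M)) (\<lambda>\<omega>. restrict (\<lambda>k. Y k \<omega>) {2*i})
        (PiM {2*i+1} (\<lambda>_. S_M)) (\<lambda>\<omega>. restrict (\<lambda>k. Y k \<omega>) {2*i+1})"
      by (rule indep_var_restrict[OF ind]) auto
    have m1: "(\<lambda>f. f (2*i)) \<in> measurable (PiM {2*i} (\<lambda>_. S_M)) S_M" by measurable
    have m2: "(\<lambda>f. f (2*i+1)) \<in> measurable (PiM {2*i+1} (\<lambda>_. S_M)) S_M" by measurable
    have "indep_var S_M ((\<lambda>f. f (2*i)) \<circ> (\<lambda>\<omega>. restrict (\<lambda>k. Y k \<omega>) {2*i}))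
        S_M ((\<lambda>f. f (2*i+1)) \<circ> (\<lambda>\<omega>. restrict (\<lambda>k. Y k \<omega>) {2*i+1}))"
      by (rule indep_var_compose[OF iv0 m1 m2])
    then have iv: "indep_var S_M (Y (2*i)) S_M (Y (2*i+1))"
      by (simp add: comp_def)
    have eq: "\<nu> \<Otimes>\<^sub>M \<nu> = distr M (S_M \<Otimes>\<^sub>M S_M) (\<lambda>x. (Y (2*i) x, Y (2*i+1) x))"
      using iv unfolding indep_var_distribution_eq d by simp
    have pm: "(\<lambda>x. (Y (2*i) x, Y (2*i+1) x)) \<in> measurable M (S_M \<Otimes>\<^sub>M S_M)"
      using rv by measurable
    have "distr M S_M (\<lambda>\<omega>. Phi_A (Y (2*i) \<omega>) (Y (2*i+1) \<omega>))
        = distr (distr M (S_M \<Otimes>\<^sub>M S_M) (\<lambda>x. (Y (2*i) x, Y (2*i+1) x))) S_M (\<lambda>(y, z). Phi_A y z)"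
      using distr_distr[OF Phi_A_meas pm] by (simp add: comp_def)
    then show "distr M S_M (\<lambda>\<omega>. Phi_A (Y (2*i) \<omega>) (Y (2*i+1) \<omega>)) = F_A \<nu>"
      using eq by (simp add: F_A_def)
  qed
qed

lemma CA_step: "CA x (2 * Suc n) = (\<lambda>i. Phi_A (Phi_b (CA x (2*n) (2*i))) (Phi_b (CA x (2*n) (2*i+1))))"
  by (simp add: and_step_def or_step_def Phi_A_def Phi_b_def)

lemma CA_hat_step: "CA_hat x (2 * Suc n) = (\<lambda>i. Phi_b (Phi_A (CA_hat x (2*n) (2*i)) (CA_hat x (2*n) (2*i+1))))"
  by (simp add: and_step_def or_step_def Phi_A_def Phi_b_def)

theorem lemma16:
  fixes P :: "'w measure" and X0 :: "'w \<Rightarrow> config" and \<mu> :: "(nat \<Rightarrow> bool) measure"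
  assumes "prob_space P"
    and "prob_space \<mu>" and "sets \<mu> = sets S_M"
    and "prob_space.indep_vars P (\<lambda>_. S_M) (\<lambda>i \<omega>. X0 \<omega> i) UNIV"
    and "\<And>i. distr P S_M (\<lambda>\<omega>. X0 \<omega> i) = \<mu>"
  shows "\<forall>n. (prob_space.indep_vars P (\<lambda>_. S_M) (\<lambda>i \<omega>. CA (X0 \<omega>) (2*n) i) UNIV
              \<and> (\<forall>i. distr P S_M (\<lambda>\<omega>. CA (X0 \<omega>) (2*n) i) = (F ^^ n) \<mu>))
           \<and> (prob_space.indep_vars P (\<lambda>_. S_M) (\<lambda>i \<omega>. CA_hat (X0 \<omega>) (2*n) i) UNIV
              \<and> (\<forall>i. distr P S_M (\<lambda>\<omega>. CA_hat (X0 \<omega>) (2*n) i) = (F_hat ^^ n) \<mu>))"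
proof -
  interpret prob_space P by (rule assms(1))
  show ?thesis
  apply (rule allI)
  subgoal for n
  proof (induction n)
    case 0
    then show ?case using assms by simp
  next
    case (Suc n)
    have A: "indep_vars (\<lambda>_. S_M) (\<lambda>i \<omega>. CA (X0 \<omega>) (2*n) i) UNIV"
      "\<And>i. distr P S_M (\<lambda>\<omega>. CA (X0 \<omega>) (2*n) i) = (F ^^ n) \<mu>"
      using Suc by auto
    have B: "indep_vars (\<lambda>_. S_M) (\<lambda>i \<omega>. CA_hat (X0 \<omega>) (2*n) i) UNIV"
      "\<And>i. distr P S_M (\<lambda>\<omega>. CA_hat (X0 \<omega>) (2*n) i) = (F_hat ^^ n) \<mu>"
      using Suc by auto
    from step_b[OF A] have A1: "indep_vars (\<lambda>_. S_M) (\<lambda>i \<omega>. Phi_b (CA (X0 \<omega>) (2*n) i)) UNIV"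
      "\<And>i. distr P S_M (\<lambda>\<omega>. Phi_b (CA (X0 \<omega>) (2*n) i)) = F_b ((F ^^ n) \<mu>)" by auto
    from step_A[OF A1] have A2:
      "indep_vars (\<lambda>_. S_M) (\<lambda>i \<omega>. CA (X0 \<omega>) (2*Suc n) i) UNIV \<and>
       (\<forall>i. distr P S_M (\<lambda>\<omega>. CA (X0 \<omega>) (2*Suc n) i) = (F ^^ Suc n) \<mu>)"
      by (simp only: CA_step) (simp add: F_def)
    from step_A[OF B] have B1: "indep_vars (\<lambda>_. S_M) (\<lambda>i \<omega>. Phi_A (CA_hat (X0 \<omega>) (2*n) (2*i)) (CA_hat (X0 \<omega>) (2*n) (2*i+1))) UNIV"
      "\<And>i. distr P S_M (\<lambda>\<omega>. Phi_A (CA_hat (X0 \<omega>) (2*n) (2*i)) (CA_hat (X0 \<omega>) (2*n) (2*i+1))) = F_A ((F_hat ^^ n) \<mu>)" by auto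
    from step_b[OF B1] have B2:
      "indep_vars (\<lambda>_. S_M) (\<lambda>i \<omega>. CA_hat (X0 \<omega>) (2*Suc n) i) UNIV \<and>
       (\<forall>i. distr P S_M (\<lambda>\<omega>. CA_hat (X0 \<omega>) (2*Suc n) i) = (F_hat ^^ Suc n) \<mu>)"
      by (simp only: CA_hat_step) (simp add: F_hat_def)
    show ?case using A2 B2 by blast
  qed
  done
qed

end
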